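(* Let $X\times G\to X$ be a continuous right action of a locally compact Hausdorff group on a Hausdorff space, and let $F\subseteq X$ be a closed subset such that the action is $F$-proper. Then $FG\subseteq X$ is closed.
   Context: For $A,B\subseteq X$ set $\langle A:B\rangle:=\{g\in G: Bg\cap A\neq\emptyset\}$ and write $A\perp B$ if it is relatively compact in $G$. For closed $F$, the action is $F$-proper if for every $x\in X$ there are neighborhoods $V_x\ni x$ and $V_F\supseteq F$ with $V_F\perp V_x$. *)

theory Defs
  imports "HOL-Analysis.Analysis"
begin

text \<open>A (not necessarily abelian) topological group is modelled by the type class
  topological_group_add (group_add with continuous addition and inversion), written additively.\<close>

definition right_action :: "('x \<Rightarrow> 'g::group_add \<Rightarrow> 'x) \<Rightarrow> bool" where
  "right_action act \<longleftrightarrow> (\<forall>x. act x 0 = x) \<and> (\<forall>x g h. act (act x g) h = act x (g + h))"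

definition transporter :: "('x \<Rightarrow> 'g \<Rightarrow> 'x) \<Rightarrow> 'x set \<Rightarrow> 'x set \<Rightarrow> 'g set" where
  "transporter act A B = {g. (\<lambda>b. act b g) ` B \<inter> A \<noteq> {}}"

definition perp :: "('x \<Rightarrow> 'g::topological_space \<Rightarrow> 'x) \<Rightarrow> 'x set \<Rightarrow> 'x set \<Rightarrow> bool" where
  "perp act A B \<longleftrightarrow> compact (closure (transporter act A B))"

definition F_proper :: "('x::topological_space \<Rightarrow> 'g::topological_space \<Rightarrow> 'x) \<Rightarrow> 'x set \<Rightarrow> bool" where
  "F_proper act F \<longleftrightarrow> (\<forall>x. \<exists>Vx VF. x \<in> interior Vx \<and> F \<subseteq> interior VF \<and> perp act VF Vx)"

end

theory Submission
  imports Defs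
begin

lemma proj_closed_aux:
  fixes W :: "('a::topological_space \<times> 'b::topological_space) set"
  assumes K: "compact K" and W: "closed W"
  shows "closed {z. \<exists>h\<in>K. (z, h) \<in> W}"
  unfolding closed_def
proof (subst open_subopen, intro ballI)
  fix z0 assume "z0 \<in> - {z. \<exists>h\<in>K. (z, h) \<in> W}"
  then have "{z0} \<times> K \<subseteq> - W" by auto
  from Elementary_Topology.tube_lemma[OF K _ this] W obtain X0 where "z0 \<in> X0" "open X0" "X0 \<times> K \<subseteq> - W"
    by (auto simp: closed_def)
  then show "\<exists>T. open T \<and> z0 \<in> T \<and> T \<subseteq> - {z. \<exists>h\<in>K. (z, h) \<in> W}"
    by (intro exI[of _ X0]) auto
qed

theorem corollary2p11:
  fixes act :: "'x::t2_space \<Rightarrow> 'g::{topological_group_add, t2_space} \<Rightarrow> 'x"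
    and F :: "'x set"
  assumes "locally_compact_space (euclidean :: 'g topology)"
    and "right_action act"
    and "continuous_on UNIV (\<lambda>(x, g). act x g)"
    and "closed F"
    and "F_proper act F"
  shows "closed {act f g | f g. f \<in> F}"
proof -
  let ?FG = "{act f g | f g. f \<in> F}"
  have a0: "\<And>x. act x 0 = x" and aa: "\<And>x g h. act (act x g) h = act x (g + h)"
    using assms(2) unfolding right_action_def by auto
  have Wc: "closed ((\<lambda>(x, g). act x g) -` F)"
    using continuous_closed_vimage assms(3,4) by (metis closed_vimage continuous_on_closed_vimage)
  have "closure ?FG \<subseteq> ?FG"
  proof
    fix y assume y: "y \<in> closure ?FG"
    obtain Vx VF where V: "y \<in> interior Vx" "F \<subseteq> interior VF" "perp act VF Vx"
      using assms(5) unfolding F_proper_def by blast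
    define K where "K = closure (transporter act VF Vx)"
    have K: "compact K" using V(3) unfolding perp_def K_def by simp
    define S where "S = {z. \<exists>h\<in>K. (z, h) \<in> (\<lambda>(x, g). act x g) -` F}"
    have Sc: "closed S" unfolding S_def by (rule proj_closed_aux[OF K Wc])
    have SFG: "S \<subseteq> ?FG"
    proof
      fix z assume "z \<in> S"
      then obtain h where "act z h \<in> F" unfolding S_def by auto
      moreover have "z = act (act z h) (-h)" by (simp add: aa a0)
      ultimately show "z \<in> ?FG" by blast
    qed
    have FGS: "interior Vx \<inter> ?FG \<subseteq> S"
    proof
      fix z assume "z \<in> interior Vx \<inter> ?FG"
      then obtain f g where z: "z \<in> Vx" "f \<in> F" "z = act f g"
        using interior_subset by blast
      have "act z (-g) = f" using z by (simp add: aa a0)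
      then have "-g \<in> transporter act VF Vx"
        unfolding transporter_def using z V(2) interior_subset by blast
      then have "-g \<in> K" unfolding K_def using closure_subset by blast
      then show "z \<in> S" unfolding S_def using \<open>act z (-g) = f\<close> z by (metis (mono_tags, lifting) mem_Collect_eq vimage_eq case_prod_conv)
    qed
    have "y \<in> closure (interior Vx \<inter> ?FG)"
      using open_Int_closure_subset[OF open_interior, of Vx ?FG] V(1) y by blast
    also have "\<dots> \<subseteq> S" by (rule closure_minimal[OF FGS Sc])
    finally show "y \<in> ?FG" using SFG by blast
  qed
  then show ?thesis using closure_subset_eq by blast
qed

end
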